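(* Let $G$ be a graph with $n$ vertices and let $H$ be a blowup of $G$ with $m$ vertices. If $\sigma'$ is a multiset of $m-n$ real numbers and $A\in\mathcal{S}(G)$ is a matrix none of whose diagonal entries belongs to $\sigma'$, then there is a matrix $A'\in\mathcal{S}(H)$ with spectrum $\operatorname{spec}(A)\cup\sigma'$ (union of multisets).
   Context: For a simple graph $G$ on $n$ vertices, $\mathcal{S}(G)$ is the set of all $n\times n$ real symmetric matrices $A=(a_{ij})$ such that for $i\neq j$, $a_{ij}\neq 0$ if and only if $\{i,j\}$ is an edge of $G$ (diagonal entries unrestricted). For a vertex $v$ of a graph and a positive integer $k$, the $k$-duplication of $v$ replaces $v$ by $k$ mutually adjacent vertices, each adjacent to exactly the neighbours of $v$ in $G-v$ (so the resulting graph has $|G|+k-1$ vertices; $1$-duplication does nothing). If $V(G)=\{v_1,\ldots,v_n\}$ and $m_1,\ldots,m_n$ are positive integers, the (closed) blowup of $G$ with respect to $m_1,\ldots,m_n$ is the graph obtained from $G$ by performing the $m_i$-duplication of $v_i$ for $i=1,\ldots,n$ sequentially; it has $\sum_i m_i$ vertices. *)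

theory Defs
  imports "Jordan_Normal_Form.Char_Poly" "HOL-Computational_Algebra.Polynomial"
begin

definition simple_graph :: "nat \<Rightarrow> (nat \<Rightarrow> nat \<Rightarrow> bool) \<Rightarrow> bool" where
  "simple_graph n E \<longleftrightarrow> (\<forall>i j. E i j \<longrightarrow> E j i \<and> i \<noteq> j \<and> i < n \<and> j < n)"

definition in_S :: "nat \<Rightarrow> (nat \<Rightarrow> nat \<Rightarrow> bool) \<Rightarrow> real mat \<Rightarrow> bool" where
  "in_S n E A \<longleftrightarrow> A \<in> carrier_mat n n \<and> transpose_mat A = A \<and>
     (\<forall>i<n. \<forall>j<n. i \<noteq> j \<longrightarrow> (A $$ (i, j) \<noteq> 0 \<longleftrightarrow> E i j))"

text \<open>H (on {0..<m}) is a (closed) blowup of G (on {0..<n}), up to relabelling: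
  there is a surjection f onto the vertices of G whose fibres are the cliques of
  duplicated vertices; distinct u, v are adjacent iff they come from the same vertex
  or from adjacent vertices of G.\<close>
definition is_blowup :: "nat \<Rightarrow> (nat \<Rightarrow> nat \<Rightarrow> bool) \<Rightarrow> nat \<Rightarrow> (nat \<Rightarrow> nat \<Rightarrow> bool) \<Rightarrow> bool" where
  "is_blowup n E m F \<longleftrightarrow> (\<exists>f. f ` {0..<m} = {0..<n} \<and>
     (\<forall>u v. F u v \<longleftrightarrow> (u < m \<and> v < m \<and> u \<noteq> v \<and> (f u = f v \<or> E (f u) (f v)))))"

definition spec :: "real mat \<Rightarrow> real multiset" where
  "spec A = proots (char_poly A)"

end

theory Submission
  imports Defs
begin

lemma sum_one_nz:
  assumes "finite K" "a \<in> K" "\<forall>k\<in>K. k \<noteq> a \<longrightarrow> g k = 0"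
  shows "sum g K = g a"
proof -
  have "sum g K = g a + sum g (K - {a})" using assms by (simp add: sum.remove)
  also have "sum g (K - {a}) = 0" using assms by (intro sum.neutral) auto
  finally show ?thesis by simp
qed

lemma sum_two_nz:
  assumes "finite K" "a \<in> K" "b \<in> K" "a \<noteq> b" "\<forall>k\<in>K. k \<noteq> a \<longrightarrow> k \<noteq> b \<longrightarrow> g k = 0"
  shows "sum g K = g a + g b"
proof -
  have "sum g K = g a + sum g (K - {a})" using assms by (simp add: sum.remove)
  also have "sum g (K - {a}) = g b" using assms by (intro sum_one_nz) auto
  finally show ?thesis .
qed

lemma mult_entry:
  assumes "A \<in> carrier_mat nr n" "B \<in> carrier_mat n nc" "i < nr" "j < nc"
  shows "(A * B) $$ (i, j) = (\<Sum>k\<in>{0..<n}. A $$ (i, k) * B $$ (k, j))"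
  using assms by (auto simp: scalar_prod_def intro: sum.cong)

definition Rm :: "nat \<Rightarrow> nat \<Rightarrow> real \<Rightarrow> real \<Rightarrow> real mat" where
  "Rm n v c s = mat (Suc n) (Suc n) (\<lambda>(i,j). if i = v \<and> j = v then c else if i = v \<and> j = n then s
     else if i = n \<and> j = v then s else if i = n \<and> j = n then -c else if i = j then 1 else 0)"

lemma Rm_carrier[simp]: "Rm n v c s \<in> carrier_mat (Suc n) (Suc n)"
  by (simp add: Rm_def)

lemma Rm_left:
  assumes "X \<in> carrier_mat (Suc n) nc" "v < n" "i < Suc n" "j < nc"
  shows "(Rm n v c s * X) $$ (i, j) = (if i = v then c * X $$ (v, j) + s * X $$ (n, j)
     else if i = n then s * X $$ (v, j) - c * X $$ (n, j) else X $$ (i, j))"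
proof -
  have e: "(Rm n v c s * X) $$ (i, j) = (\<Sum>k\<in>{0..<Suc n}. Rm n v c s $$ (i, k) * X $$ (k, j))"
    using assms by (intro mult_entry) auto
  show ?thesis
  proof (cases "i = v \<or> i = n")
    case True
    then show ?thesis unfolding e using assms
      by (subst sum_two_nz[where a = v and b = n]) (auto simp: Rm_def)
  next
    case False
    then show ?thesis unfolding e using assms
      by (subst sum_one_nz[where a = i]) (auto simp: Rm_def)
  qed
qed

lemma Rm_right:
  assumes "X \<in> carrier_mat nr (Suc n)" "v < n" "i < nr" "j < Suc n"
  shows "(X * Rm n v c s) $$ (i, j) = (if j = v then c * X $$ (i, v) + s * X $$ (i, n)
     else if j = n then s * X $$ (i, v) - c * X $$ (i, n) else X $$ (i, j))"
proof -
  have e: "(X * Rm n v c s) $$ (i, j) = (\<Sum>k\<in>{0..<Suc n}. X $$ (i, k) * Rm n v c s $$ (k, j))"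
    using assms by (intro mult_entry) auto
  show ?thesis
  proof (cases "j = v \<or> j = n")
    case True
    then show ?thesis unfolding e using assms
      by (subst sum_two_nz[where a = v and b = n]) (auto simp: Rm_def)
  next
    case False
    then show ?thesis unfolding e using assms
      by (subst sum_one_nz[where a = j]) (auto simp: Rm_def)
  qed
qed

lemma Rm_orth:
  assumes "v < n" "c * c + s * s = 1"
  shows "Rm n v c s * Rm n v c s = 1\<^sub>m (Suc n)"
proof (rule eq_matI)
  fix i j assume ij: "i < dim_row (1\<^sub>m (Suc n) :: real mat)" "j < dim_col (1\<^sub>m (Suc n) :: real mat)"
  then show "(Rm n v c s * Rm n v c s) $$ (i, j) = 1\<^sub>m (Suc n) $$ (i, j)"
    using assms by (subst Rm_left) (auto simp: Rm_def algebra_simps)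
qed (auto simp: Rm_def)

lemma char_poly_block:
  fixes A D :: "'a :: idom mat"
  assumes A: "A \<in> carrier_mat n n" and D: "D \<in> carrier_mat m m"
  shows "char_poly (four_block_mat A (0\<^sub>m n m) (0\<^sub>m m n) D) = char_poly A * char_poly D"
proof -
  let ?cm = "\<lambda> A. [:0, 1:] \<cdot>\<^sub>m 1\<^sub>m (dim_row A) + map_mat (\<lambda>a. [:- a:]) A"
  have "char_poly (four_block_mat A (0\<^sub>m n m) (0\<^sub>m m n) D) = det (?cm (four_block_mat A (0\<^sub>m n m) (0\<^sub>m m n) D))"
    unfolding char_poly_defs using A D by simp
  also have "?cm (four_block_mat A (0\<^sub>m n m) (0\<^sub>m m n) D) = four_block_mat (?cm A) (0\<^sub>m n m) (0\<^sub>m m n) (?cm D)"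
    by (rule eq_matI, insert A D, auto simp: one_poly_def)
  also have "det \<dots> = det (?cm A) * det (?cm D)"
    by (rule det_four_block_mat_lower_left_zero, insert A D, auto)
  also have "\<dots> = char_poly A * char_poly D" unfolding char_poly_defs ..
  finally show ?thesis .
qed

lemma char_poly_1x1: "char_poly (mat 1 1 (\<lambda>_. (x::real))) = [:-x, 1:]"
proof -
  have "char_poly (mat 1 1 (\<lambda>_. x)) = (\<Prod> a \<leftarrow> diag_mat (mat 1 1 (\<lambda>_. x)). [:- a, 1:])"
    by (rule char_poly_upper_triangular[of _ 1]) (auto simp: upper_triangular_def)
  also have "diag_mat (mat 1 1 (\<lambda>_. x)) = [x]" by (simp add: diag_mat_def)
  finally show ?thesis by simp
qed

lemma char_poly_nz: "A \<in> carrier_mat n n \<Longrightarrow> char_poly (A :: real mat) \<noteq> 0"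
  using degree_monic_char_poly[of A n] by auto

definition Bm :: "nat \<Rightarrow> real mat \<Rightarrow> real \<Rightarrow> real mat" where
  "Bm n A l = mat (Suc n) (Suc n) (\<lambda>(i,j). if i < n \<and> j < n then A $$ (i,j) else if i = n \<and> j = n then l else 0)"

lemma Bm_carrier[simp]: "Bm n A l \<in> carrier_mat (Suc n) (Suc n)"
  by (simp add: Bm_def)

lemma Bm_idx: "i < Suc n \<Longrightarrow> j < Suc n \<Longrightarrow>
  Bm n A l $$ (i,j) = (if i < n \<and> j < n then A $$ (i,j) else if i = n \<and> j = n then l else 0)"
  by (simp add: Bm_def)

lemma Bm_block:
  assumes "A \<in> carrier_mat n n"
  shows "Bm n A l = four_block_mat A (0\<^sub>m n 1) (0\<^sub>m 1 n) (mat 1 1 (\<lambda>_. l))"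
  by (rule eq_matI) (insert assms, auto simp: Bm_def)

lemma M_entry:
  assumes "v < n" "i < Suc n" "j < Suc n"
  shows "(Rm n v c s * Bm n A l * Rm n v c s) $$ (i, j) =
    (if i = v \<and> j = v then c*c*A$$(v,v) + s*s*l else if i = n \<and> j = n then s*s*A$$(v,v) + c*c*l
     else if (i = v \<and> j = n) \<or> (i = n \<and> j = v) then c*s*(A$$(v,v) - l)
     else if i = v then c*A$$(v,j) else if i = n then s*A$$(v,j)
     else if j = v then c*A$$(i,v) else if j = n then s*A$$(i,v) else A$$(i,j))"
proof -
  have RB: "Rm n v c s * Bm n A l \<in> carrier_mat (Suc n) (Suc n)" by (rule mult_carrier_mat[OF Rm_carrier Bm_carrier])
  show ?thesis
    using assms
    by (auto simp: Rm_right[OF RB] Rm_left[OF Bm_carrier] Bm_idx algebra_simps)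
qed

definition gv :: "nat \<Rightarrow> nat \<Rightarrow> nat \<Rightarrow> nat" where
  "gv n v z = (if z = n then v else z)"

definition dupE :: "nat \<Rightarrow> nat \<Rightarrow> (nat \<Rightarrow> nat \<Rightarrow> bool) \<Rightarrow> nat \<Rightarrow> nat \<Rightarrow> bool" where
  "dupE n v E x y \<longleftrightarrow> x < Suc n \<and> y < Suc n \<and> x \<noteq> y \<and> (gv n v x = gv n v y \<or> E (gv n v x) (gv n v y))"

lemma in_S_sym:
  assumes "in_S n E A" "i < n" "j < n"
  shows "A $$ (i, j) = A $$ (j, i)"
proof -
  have c: "A \<in> carrier_mat n n" and t: "transpose_mat A = A" using assms(1) by (auto simp: in_S_def)
  have "A $$ (j, i) = transpose_mat A $$ (i, j)" using c assms by simp
  then show ?thesis using t by simp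
qed

lemma spec_similar:
  assumes "similar_mat A B" shows "spec A = spec B"
  using char_poly_similar[OF assms] by (simp add: spec_def)

lemma dup:
  assumes sg: "simple_graph n E" and AS: "in_S n E A" and v: "v < n" and l: "l \<noteq> A$$(v,v)"
    and S: "finite S"
  shows "\<exists>A1. in_S (Suc n) (dupE n v E) A1 \<and> spec A1 = spec A + {#l#} \<and>
    (\<forall>i<Suc n. (i = v \<or> i = n \<longrightarrow> A1$$(i,i) \<notin> S) \<and> (i \<noteq> v \<and> i \<noteq> n \<longrightarrow> A1$$(i,i) = A$$(i,i)))"
proof -
  let ?a = "A$$(v,v)"
  have Ac: "A \<in> carrier_mat n n" using AS by (simp add: in_S_def)
  have Apat: "\<And>i j. i < n \<Longrightarrow> j < n \<Longrightarrow> i \<noteq> j \<Longrightarrow> A $$ (i, j) \<noteq> 0 \<longleftrightarrow> E i j"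
    using AS by (simp add: in_S_def)
  have Esym: "\<And>i j. E i j \<Longrightarrow> E j i \<and> i \<noteq> j \<and> i < n \<and> j < n" using sg by (simp add: simple_graph_def)
  have al: "?a - l \<noteq> 0" using l by simp
  define bad where "bad = (\<lambda>x. (x - l)/(?a - l)) ` S \<union> (\<lambda>x. (?a - x)/(?a - l)) ` S"
  have "finite bad" using S by (simp add: bad_def)
  moreover have "infinite {0<..<(1::real)}" by (rule infinite_Ioo) simp
  ultimately have "\<not> {0<..<(1::real)} \<subseteq> bad" using finite_subset by metis
  then obtain t where t0: "0 < t" and t1: "t < 1" and tb: "t \<notin> bad" using greaterThanLessThan_iff subsetI by meson
  have h1: "t * ?a + (1 - t) * l \<notin> S"
  proof
    assume "t * ?a + (1 - t) * l \<in> S"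
    moreover have "t = (\<lambda>x. (x - l)/(?a - l)) (t * ?a + (1 - t) * l)" using al by (simp add: field_simps)
    ultimately have "t \<in> (\<lambda>x. (x - l)/(?a - l)) ` S" by (simp add: image_eqI)
    then show False using tb unfolding bad_def by blast
  qed
  have h2: "(1 - t) * ?a + t * l \<notin> S"
  proof
    assume "(1 - t) * ?a + t * l \<in> S"
    moreover have "t = (\<lambda>x. (?a - x)/(?a - l)) ((1 - t) * ?a + t * l)" using al by (simp add: field_simps)
    ultimately have "t \<in> (\<lambda>x. (?a - x)/(?a - l)) ` S" by (simp add: image_eqI)
    then show False using tb unfolding bad_def by blast
  qed
  define c where "c = sqrt t"
  define s where "s = sqrt (1 - t)"
  have cc: "c * c = t" using t0 by (simp add: c_def)
  have ss: "s * s = 1 - t" using t1 by (simp add: s_def)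
  have c0: "c \<noteq> 0" using t0 by (simp add: c_def)
  have s0: "s \<noteq> 0" using t1 by (simp add: s_def)
  define A1 where "A1 = Rm n v c s * Bm n A l * Rm n v c s"
  have A1c: "A1 \<in> carrier_mat (Suc n) (Suc n)" unfolding A1_def
    by (rule mult_carrier_mat[OF mult_carrier_mat[OF Rm_carrier Bm_carrier] Rm_carrier])
  have ent: "\<And>i j. i < Suc n \<Longrightarrow> j < Suc n \<Longrightarrow> A1 $$ (i, j) =
    (if i = v \<and> j = v then c*c*A$$(v,v) + s*s*l else if i = n \<and> j = n then s*s*A$$(v,v) + c*c*l
     else if (i = v \<and> j = n) \<or> (i = n \<and> j = v) then c*s*(A$$(v,v) - l)
     else if i = v then c*A$$(v,j) else if i = n then s*A$$(v,j)
     else if j = v then c*A$$(i,v) else if j = n then s*A$$(i,v) else A$$(i,j))"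
    unfolding A1_def using v by (rule M_entry)
  have symA: "\<And>i j. i < n \<Longrightarrow> j < n \<Longrightarrow> A $$ (i, j) = A $$ (j, i)" using AS in_S_sym by blast
  have tr: "transpose_mat A1 = A1"
  proof (rule eq_matI)
    fix i j assume "i < dim_row A1" "j < dim_col A1"
    then have ij: "i < Suc n" "j < Suc n" using A1c by auto
    then show "transpose_mat A1 $$ (i, j) = A1 $$ (i, j)"
      using A1c ent[OF ij] ent[OF ij(2,1)] symA[of i j] symA[of v j] symA[of i v] v
      by (auto simp: algebra_simps)
  qed (insert A1c, auto)
  have pat: "\<forall>i<Suc n. \<forall>j<Suc n. i \<noteq> j \<longrightarrow> (A1 $$ (i, j) \<noteq> 0 \<longleftrightarrow> dupE n v E i j)"
  proof (intro allI impI)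
    fix i j assume i: "i < Suc n" and j: "j < Suc n" and ij: "i \<noteq> j"
    show "A1 $$ (i, j) \<noteq> 0 \<longleftrightarrow> dupE n v E i j"
      unfolding ent[OF i j] dupE_def gv_def
      using i j ij v c0 s0 al Apat[of v j] Apat[of i v] Apat[of i j]
      by (auto simp: less_Suc_eq)
  qed
  have inS: "in_S (Suc n) (dupE n v E) A1" using A1c tr pat by (simp add: in_S_def)
  have sim: "similar_mat A1 (Bm n A l)"
    by (rule similar_matI[of _ _ "Rm n v c s" "Rm n v c s" "Suc n"])
      (insert A1c Rm_orth[OF v, of c s] cc ss, auto simp: A1_def)
  have "spec A1 = spec (Bm n A l)" by (rule spec_similar[OF sim])
  also have "\<dots> = proots (char_poly A * [:-l, 1:])"
    unfolding spec_def Bm_block[OF Ac] char_poly_block[OF Ac mat_carrier] char_poly_1x1 ..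
  also have "\<dots> = spec A + {#l#}"
    by (subst proots_mult) (use char_poly_nz[OF Ac] in \<open>simp_all add: spec_def\<close>)
  finally have sp: "spec A1 = spec A + {#l#}" .
  have dg: "\<forall>i<Suc n. (i = v \<or> i = n \<longrightarrow> A1$$(i,i) \<notin> S) \<and> (i \<noteq> v \<and> i \<noteq> n \<longrightarrow> A1$$(i,i) = A$$(i,i))"
  proof (intro allI impI conjI)
    fix i assume i: "i < Suc n"
    show "i = v \<or> i = n \<Longrightarrow> A1$$(i,i) \<notin> S"
    proof -
      assume iv: "i = v \<or> i = n"
      have e1: "A1 $$ (v, v) = t * ?a + (1 - t) * l" using ent[of v v] v cc ss by simp
      have e2: "A1 $$ (n, n) = (1 - t) * ?a + t * l" using ent[of n n] v cc ss by simp
      show ?thesis using iv e1 e2 h1 h2 by auto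
    qed
    show "i \<noteq> v \<and> i \<noteq> n \<Longrightarrow> A1$$(i,i) = A$$(i,i)" using ent[OF i i] by auto
  qed
  show ?thesis using inS sp dg by blast
qed

lemma perm_case:
  fixes A :: "real mat" and f :: "nat \<Rightarrow> nat"
  assumes img: "f ` {0..<n} = {0..<n}" and inj: "inj_on f {0..<n}" and Ac: "A \<in> carrier_mat n n"
  shows "similar_mat (mat n n (\<lambda>(i,j). A $$ (f i, f j))) A"
proof -
  have fi: "\<And>i. i < n \<Longrightarrow> f i < n" using img by auto
  define P where "P = mat n n (\<lambda>(i,j). if f i = j then 1 else (0::real))"
  define Q where "Q = mat n n (\<lambda>(i,j). if f j = i then 1 else (0::real))"
  have Pc: "P \<in> carrier_mat n n" and Qc: "Q \<in> carrier_mat n n" by (auto simp: P_def Q_def)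
  have PX: "(P * X) $$ (i, j) = X $$ (f i, j)" if "X \<in> carrier_mat n nc" "i < n" "j < nc" for X nc i j
  proof -
    have "(P * X) $$ (i, j) = (\<Sum>k\<in>{0..<n}. P $$ (i, k) * X $$ (k, j))"
      by (rule mult_entry[OF Pc that])
    also have "\<dots> = P $$ (i, f i) * X $$ (f i, j)"
      by (rule sum_one_nz) (use that fi in \<open>auto simp: P_def\<close>)
    finally show ?thesis using that fi by (simp add: P_def)
  qed
  have XQ: "(X * Q) $$ (i, j) = X $$ (i, f j)" if "X \<in> carrier_mat nr n" "i < nr" "j < n" for X nr i j
  proof -
    have "(X * Q) $$ (i, j) = (\<Sum>k\<in>{0..<n}. X $$ (i, k) * Q $$ (k, j))"
      by (rule mult_entry[OF that(1) Qc that(2-3)])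
    also have "\<dots> = X $$ (i, f j) * Q $$ (f j, j)"
      by (rule sum_one_nz) (use that fi in \<open>auto simp: Q_def\<close>)
    finally show ?thesis using that fi by (simp add: Q_def)
  qed
  have XP: "(X * P) $$ (i, j) = X $$ (i, k0)" if "X \<in> carrier_mat nr n" "i < nr" "j < n" "k0 < n" "f k0 = j" for X nr i j k0
  proof -
    have "(X * P) $$ (i, j) = (\<Sum>k\<in>{0..<n}. X $$ (i, k) * P $$ (k, j))"
      by (rule mult_entry[OF that(1) Pc that(2-3)])
    also have "\<dots> = X $$ (i, k0) * P $$ (k0, j)"
    proof (rule sum_one_nz)
      show "\<forall>k\<in>{0..<n}. k \<noteq> k0 \<longrightarrow> X $$ (i, k) * P $$ (k, j) = 0"
        using that inj by (auto simp: P_def inj_on_def)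
    qed (use that in auto)
    finally show ?thesis using that by (simp add: P_def)
  qed
  have PQ: "P * Q = 1\<^sub>m n"
  proof (rule eq_matI)
    fix i j assume "i < dim_row (1\<^sub>m n :: real mat)" "j < dim_col (1\<^sub>m n :: real mat)"
    then have ij: "i < n" "j < n" by auto
    show "(P * Q) $$ (i, j) = 1\<^sub>m n $$ (i, j)"
      using PX[OF Qc ij] ij fi inj_onD[OF inj, of i j] by (auto simp: Q_def)
  qed (use Pc Qc in auto)
  have QP: "Q * P = 1\<^sub>m n"
  proof (rule eq_matI)
    fix i j assume "i < dim_row (1\<^sub>m n :: real mat)" "j < dim_col (1\<^sub>m n :: real mat)"
    then have ij: "i < n" "j < n" by auto
    then have "j \<in> f ` {0..<n}" using img by auto
    then obtain k0 where k0: "k0 < n" "f k0 = j" by auto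
    show "(Q * P) $$ (i, j) = 1\<^sub>m n $$ (i, j)"
      using XP[OF Qc ij k0] ij k0 by (auto simp: Q_def)
  qed (use Pc Qc in auto)
  have PAc: "P * A \<in> carrier_mat n n" using Pc Ac by simp
  have eq: "mat n n (\<lambda>(i,j). A $$ (f i, f j)) = P * A * Q"
  proof (rule eq_matI)
    fix i j assume "i < dim_row (P * A * Q)" "j < dim_col (P * A * Q)"
    then have ij: "i < n" "j < n" using Pc Qc by auto
    show "mat n n (\<lambda>(i,j). A $$ (f i, f j)) $$ (i, j) = (P * A * Q) $$ (i, j)"
      using XQ[OF PAc ij] PX[OF Ac ij(1) fi[OF ij(2)]] ij by simp
  qed (use Pc Qc in auto)
  show ?thesis
    by (rule similar_matI[of _ _ P Q n]) (use Pc Qc Ac PQ QP eq in auto)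
qed

lemma main_ind:
  "\<forall>n E A \<sigma>'. m - n = k \<longrightarrow> simple_graph n E \<longrightarrow> is_blowup n E m F \<longrightarrow> size \<sigma>' = m - n \<longrightarrow>
     in_S n E A \<longrightarrow> (\<forall>i<n. A $$ (i, i) \<notin># \<sigma>') \<longrightarrow> (\<exists>A'. in_S m F A' \<and> spec A' = spec A + \<sigma>')"
proof (induction k)
  case 0
  show ?case
  proof (intro allI impI)
    fix n E A and \<sigma>' :: "real multiset"
    assume k: "m - n = 0" and sg: "simple_graph n E" and bl: "is_blowup n E m F"
      and sz: "size \<sigma>' = m - n" and AS: "in_S n E A" and dg: "\<forall>i<n. A $$ (i, i) \<notin># \<sigma>'"
    obtain f where img: "f ` {0..<m} = {0..<n}"
      and Fd: "\<forall>u v. F u v \<longleftrightarrow> (u < m \<and> v < m \<and> u \<noteq> v \<and> (f u = f v \<or> E (f u) (f v)))"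
      using bl unfolding is_blowup_def by blast
    have "n \<le> m" using card_image_le[of "{0..<m}" f] img by simp
    with k have mn: "m = n" by simp
    have inj: "inj_on f {0..<m}" using eq_card_imp_inj_on[of "{0..<m}" f] img mn by simp
    have s0: "\<sigma>' = {#}" using sz mn by simp
    have Ac: "A \<in> carrier_mat n n" using AS by (simp add: in_S_def)
    define A' where "A' = mat n n (\<lambda>(i,j). A $$ (f i, f j))"
    have fi: "\<And>i. i < n \<Longrightarrow> f i < n" using img mn by auto
    have sim: "similar_mat A' A" unfolding A'_def by (rule perm_case) (use img inj mn Ac in auto)
    have tr: "transpose_mat A' = A'"
      by (rule eq_matI) (use fi in_S_sym[OF AS] in \<open>auto simp: A'_def\<close>)
    have pat: "\<forall>i<m. \<forall>j<m. i \<noteq> j \<longrightarrow> (A' $$ (i, j) \<noteq> 0 \<longleftrightarrow> F i j)"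
    proof (intro allI impI)
      fix i j assume i: "i < m" and j: "j < m" and ij: "i \<noteq> j"
      have fij: "f i \<noteq> f j" using inj_onD[OF inj, of i j] i j ij by auto
      show "A' $$ (i, j) \<noteq> 0 \<longleftrightarrow> F i j"
      proof -
        have "A' $$ (i, j) = A $$ (f i, f j)" using i j mn by (simp add: A'_def)
        moreover have "A $$ (f i, f j) \<noteq> 0 \<longleftrightarrow> E (f i) (f j)"
          using AS fi[of i] fi[of j] i j fij mn by (simp add: in_S_def)
        moreover have "F i j \<longleftrightarrow> E (f i) (f j)" using Fd[rule_format, of i j] i j ij fij by simp
        ultimately show ?thesis by simp
      qed
    qed
    have "A' \<in> carrier_mat m m" using mn by (simp add: A'_def)
    then have "in_S m F A'" using tr pat unfolding in_S_def by blast
    moreover have "spec A' = spec A + \<sigma>'" using spec_similar[OF sim] s0 by simp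
    ultimately show "\<exists>A'. in_S m F A' \<and> spec A' = spec A + \<sigma>'" by blast
  qed
next
  case (Suc k)
  show ?case
  proof (intro allI impI)
    fix n E A and \<sigma>' :: "real multiset"
    assume k: "m - n = Suc k" and sg: "simple_graph n E" and bl: "is_blowup n E m F"
      and sz: "size \<sigma>' = m - n" and AS: "in_S n E A" and dg: "\<forall>i<n. A $$ (i, i) \<notin># \<sigma>'"
    obtain f where img: "f ` {0..<m} = {0..<n}"
      and Fd: "\<forall>u v. F u v \<longleftrightarrow> (u < m \<and> v < m \<and> u \<noteq> v \<and> (f u = f v \<or> E (f u) (f v)))"
      using bl unfolding is_blowup_def by blast
    have ninj: "\<not> inj_on f {0..<m}"
    proof
      assume "inj_on f {0..<m}"
      then have "card (f ` {0..<m}) = m" by (simp add: card_image)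
      then show False using img k by simp
    qed
    then obtain u1 u2 where u: "u1 < m" "u2 < m" "u1 \<noteq> u2" "f u1 = f u2"
      unfolding inj_on_def by auto
    define v0 where "v0 = f u1"
    have v0n: "v0 < n" using img u(1) unfolding v0_def by auto
    have "\<sigma>' \<noteq> {#}" using sz k by auto
    then obtain l where l: "l \<in># \<sigma>'" by blast
    have lv: "l \<noteq> A $$ (v0, v0)" using dg v0n l by auto
    obtain A1 where A1S: "in_S (Suc n) (dupE n v0 E) A1" and A1sp: "spec A1 = spec A + {#l#}"
      and A1d: "\<forall>i<Suc n. (i = v0 \<or> i = n \<longrightarrow> A1$$(i,i) \<notin> set_mset \<sigma>') \<and>
                 (i \<noteq> v0 \<and> i \<noteq> n \<longrightarrow> A1$$(i,i) = A$$(i,i))"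
      using dup[OF sg AS v0n lv, of "set_mset \<sigma>'"] by auto
    define f1 where "f1 u = (if u = u1 then n else f u)" for u
    have fi: "\<And>u. u < m \<Longrightarrow> f u < n" using img by auto
    have gf: "\<And>u. u < m \<Longrightarrow> gv n v0 (f1 u) = f u"
      using fi by (auto simp: gv_def f1_def v0_def)
    have img1: "f1 ` {0..<m} = {0..<Suc n}"
    proof
      show "f1 ` {0..<m} \<subseteq> {0..<Suc n}" using fi less_SucI by (force simp: f1_def)
      show "{0..<Suc n} \<subseteq> f1 ` {0..<m}"
      proof
        fix y assume y: "y \<in> {0..<Suc n}"
        show "y \<in> f1 ` {0..<m}"
        proof (cases "y = n")
          case True
          then show ?thesis using u(1) by (auto simp: f1_def)
        next
          case False
          then have "y \<in> f ` {0..<m}" using y img by auto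
          then obtain u where uu: "u < m" "y = f u" by auto
          show ?thesis
          proof (cases "u = u1")
            case True
            then have "f1 u2 = y" using u uu by (auto simp: f1_def)
            then show ?thesis using u by auto
          next
            case False
            then have "f1 u = y" using uu by (auto simp: f1_def)
            then show ?thesis using uu image_eqI[of y f1 u "{0..<m}"] by auto
          qed
        qed
      qed
    qed
    have f1eq: "\<And>u v. u < m \<Longrightarrow> v < m \<Longrightarrow> f1 u = f1 v \<Longrightarrow> f u = f v"
      using gf by metis
    have f1b: "\<And>u. u < m \<Longrightarrow> f1 u < Suc n" using fi by (simp add: f1_def less_Suc_eq)
    have Fd1: "\<forall>u v. F u v \<longleftrightarrow> (u < m \<and> v < m \<and> u \<noteq> v \<and> (f1 u = f1 v \<or> dupE n v0 E (f1 u) (f1 v)))"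
    proof (intro allI)
      fix u v
      show "F u v \<longleftrightarrow> (u < m \<and> v < m \<and> u \<noteq> v \<and> (f1 u = f1 v \<or> dupE n v0 E (f1 u) (f1 v)))"
      proof (cases "u < m \<and> v < m")
        case True
        have "dupE n v0 E (f1 u) (f1 v) \<longleftrightarrow> f1 u \<noteq> f1 v \<and> (f u = f v \<or> E (f u) (f v))"
          using True gf[of u] gf[of v] f1b[of u] f1b[of v] unfolding dupE_def by auto
        then show ?thesis using Fd[rule_format, of u v] True f1eq[of u v] by blast
      next
        case False
        then show ?thesis using Fd[rule_format, of u v] by blast
      qed
    qed
    have bl1: "is_blowup (Suc n) (dupE n v0 E) m F"
      unfolding is_blowup_def using img1 Fd1 by blast
    have sg1: "simple_graph (Suc n) (dupE n v0 E)"
      using sg unfolding simple_graph_def dupE_def by metis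
    have sz1: "size (\<sigma>' - {#l#}) = m - Suc n" using sz k l by (simp add: size_Diff_submset)
    have dg1: "\<forall>i<Suc n. A1 $$ (i, i) \<notin># \<sigma>' - {#l#}"
    proof (intro allI impI)
      fix i assume i: "i < Suc n"
      show "A1 $$ (i, i) \<notin># \<sigma>' - {#l#}"
      proof (cases "i = v0 \<or> i = n")
        case True
        then have "A1 $$ (i, i) \<notin># \<sigma>'" using A1d i by blast
        then show ?thesis by (auto dest: in_diffD)
      next
        case False
        then have "A1 $$ (i, i) = A $$ (i, i)" "i < n" using A1d i by auto
        then have "A1 $$ (i, i) \<notin># \<sigma>'" using dg by simp
        then show ?thesis by (auto dest: in_diffD)
      qed
    qed
    have km: "m - Suc n = k" using k by simp
    obtain A' where A'S: "in_S m F A'" and A'sp: "spec A' = spec A1 + (\<sigma>' - {#l#})"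
      using Suc.IH km sg1 bl1 sz1 A1S dg1 by blast
    have "spec A' = spec A + \<sigma>'" using A'sp A1sp l by (simp add: add.assoc)
    then show "\<exists>A'. in_S m F A' \<and> spec A' = spec A + \<sigma>'" using A'S by blast
  qed
qed

theorem lemma2p4:
  fixes n m :: nat and E F :: "nat \<Rightarrow> nat \<Rightarrow> bool"
    and A :: "real mat" and \<sigma>' :: "real multiset"
  assumes "simple_graph n E"
    and "is_blowup n E m F"
    and "size \<sigma>' = m - n"
    and "in_S n E A"
    and "\<forall>i<n. A $$ (i, i) \<notin># \<sigma>'"
  shows "\<exists>A'. in_S m F A' \<and> spec A' = spec A + \<sigma>'"
  using main_ind[of m "m - n" F] assms by blast

end
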